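(* Every formula derivable in the axiomatic system HDML-AX described below is valid: for all HDML formulas $\varphi$, if $\vdash\varphi$ then $\varphi$ is true at every cell of every HDML model.
   Context: A cubical set consists of pairwise disjoint sets $Q_n$ ($n\in\mathbb N$), $Q=\bigcup_n Q_n$, and for $n\ge1$, $1\le i\le n$, maps $s_i,t_i:Q_n\to Q_{n-1}$ satisfying $\alpha_i\circ\beta_j=\beta_{j-1}\circ\alpha_i$ for $1\le i<j\le n$, $\alpha,\beta\in\{s,t\}$. An HDML model is $\mathcal H=(Q,\bar s,\bar t,l,V)$ with $l:Q_1\to\Sigma$ satisfying $l(s_i(q))=l(t_i(q))$ for $q\in Q_2$, $i\in\{1,2\}$, and $V:Q\to2^{AP}$. HDML formulas: $\varphi::=p\mid\bot\mid\varphi\to\varphi\mid\langle\mathsf s\rangle\varphi\mid\langle\mathsf t\rangle\varphi$ with standard Boolean abbreviations ($\neg,\top,\wedge,\vee,\leftrightarrow$), $[\mathsf s]\varphi:=\neg\langle\mathsf s\rangle\neg\varphi$, $[\mathsf t]\varphi:=\neg\langle\mathsf t\rangle\neg\varphi$, $\langle\mathsf t\rangle^0\varphi=\varphi$, $\langle\mathsf t\rangle^{i+1}\varphi=\langle\mathsf t\rangle\langle\mathsf t\rangle^{i}\varphi$. Satisfaction at $q\in Q_n$: $p$ iff $p\in V(q)$; $\bot$ never; $\to$ classical; $\langle\mathsf s\rangle\psi$ iff some $q'\in Q_{n+1}$ and $1\le i\le n+1$ have $s_i(q')=q$ and $q'\models\psi$; $\langle\mathsf t\rangle\psi$ iff some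 $1\le i\le n$ has $t_i(q)\models\psi$. For $i\ge1$, $\langle\mathsf t\rangle(i)$ denotes any formula $\bigwedge_{j=1}^{i}\langle\mathsf t\rangle\beta_j$ where $\beta_1,\dots,\beta_i$ are propositional formulas (over atomic propositions, $\bot$, $\to$) such that $\beta_j\wedge\beta_k$ is a propositional contradiction for $j\ne k$ (e.g. $\langle\mathsf t\rangle p\wedge\langle\mathsf t\rangle\neg p$ for $i=2$). The system HDML-AX has axioms: (A1) all instances of propositional tautologies; (A2) $\langle\mathsf s\rangle\bot\leftrightarrow\bot$ and $\langle\mathsf t\rangle\bot\leftrightarrow\bot$; (A3) $\langle\mathsf s\rangle(\varphi\vee\varphi')\leftrightarrow\langle\mathsf s\rangle\varphi\vee\langle\mathsf s\rangle\varphi'$ and the same for $\langle\mathsf t\rangle$; (A4) $[\mathsf s]\varphi\leftrightarrow\neg\langle\mathsf s\rangle\neg\varphi$ and $[\mathsf t]\varphi\leftrightarrow\neg\langle\mathsf t\rangle\neg\varphi$; (A5) $\langle\mathsf t\rangle(i)\to\langle\mathsf t\rangle^i\top$ for all $i\ge1$; (A6) $\langle\mathsf t\rangle^2\top\to(\langle\mathsf t\rangle[\mathsf t]\varphi\to[\mathsf t]\langle\mathsf t\rangle\varphi)$; (A7) $\langle\mathsf s\rangle[\mathsf t]\varphi\to[\mathsf t]\langle\mathsf s\rangle\varphi$ and $\langle\mathsf t\rangle[\mathsf s]\varphi\to[\mathsf s]\langle\mathsf t\rangle\varphi$; (A8) $\langle\mathsf s\rangle\langle\mathsf t\rangle^i\top\to[\mathsf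 s]\langle\mathsf t\rangle^i\top$ and $\langle\mathsf t\rangle\langle\mathsf t\rangle^i\top\to[\mathsf t]\langle\mathsf t\rangle^i\top$ for all $i\ge0$; (A9) $\langle\mathsf t\rangle^i\top\to[\mathsf s]\langle\mathsf t\rangle\langle\mathsf t\rangle^i\top$ and $\langle\mathsf s\rangle\langle\mathsf t\rangle\langle\mathsf t\rangle^i\top\to\langle\mathsf t\rangle^i\top$ for all $i\ge0$; (A10) $\langle\mathsf s\rangle\langle\mathsf s\rangle\langle\mathsf t\rangle\varphi\to\langle\mathsf s\rangle\langle\mathsf t\rangle\langle\mathsf s\rangle\varphi$ and $\langle\mathsf s\rangle\langle\mathsf t\rangle\langle\mathsf t\rangle\varphi\to\langle\mathsf t\rangle\langle\mathsf s\rangle\langle\mathsf t\rangle\varphi$. Rules: modus ponens; from $\varphi\to\varphi'$ infer $\langle\mathsf s\rangle\varphi\to\langle\mathsf s\rangle\varphi'$; from $\varphi\to\varphi'$ infer $\langle\mathsf t\rangle\varphi\to\langle\mathsf t\rangle\varphi'$; uniform substitution of formulas for atomic propositions. $\vdash\varphi$ means $\varphi$ is derivable. *)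

theory Defs
  imports Main
begin

datatype 'p fm =
    Atom 'p
  | Bot
  | Imp "'p fm" "'p fm"
  | Dia_s "'p fm"
  | Dia_t "'p fm"

definition Neg :: "'p fm \<Rightarrow> 'p fm" where "Neg a = Imp a Bot"
definition Top :: "'p fm" where "Top = Neg Bot"
definition Disj :: "'p fm \<Rightarrow> 'p fm \<Rightarrow> 'p fm" where "Disj a b = Imp (Neg a) b"
definition Conj :: "'p fm \<Rightarrow> 'p fm \<Rightarrow> 'p fm" where "Conj a b = Neg (Imp a (Neg b))"
definition Iff :: "'p fm \<Rightarrow> 'p fm \<Rightarrow> 'p fm" where "Iff a b = Conj (Imp a b) (Imp b a)"
definition Box_s :: "'p fm \<Rightarrow> 'p fm" where "Box_s a = Neg (Dia_s (Neg a))"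
definition Box_t :: "'p fm \<Rightarrow> 'p fm" where "Box_t a = Neg (Dia_t (Neg a))"

primrec Tpow :: "nat \<Rightarrow> 'p fm \<Rightarrow> 'p fm" where
  "Tpow 0 a = a"
| "Tpow (Suc i) a = Dia_t (Tpow i a)"

fun ConjList :: "'p fm list \<Rightarrow> 'p fm" where
  "ConjList [] = Top"
| "ConjList [a] = a"
| "ConjList (a # as) = Conj a (ConjList as)"

primrec is_prop :: "'p fm \<Rightarrow> bool" where
  "is_prop (Atom p) = True"
| "is_prop Bot = True"
| "is_prop (Imp a b) = (is_prop a \<and> is_prop b)"
| "is_prop (Dia_s a) = False"
| "is_prop (Dia_t a) = False"

primrec peval :: "('p \<Rightarrow> bool) \<Rightarrow> 'p fm \<Rightarrow> bool" where
  "peval v (Atom p) = v p"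
| "peval v Bot = False"
| "peval v (Imp a b) = (peval v a \<longrightarrow> peval v b)"
| "peval v (Dia_s a) = False"
| "peval v (Dia_t a) = False"

definition prop_contradiction :: "'p fm \<Rightarrow> bool" where
  "prop_contradiction a \<longleftrightarrow> is_prop a \<and> (\<forall>v. \<not> peval v a)"

text \<open>Evaluation treating every modal subformula (and every atom) as an
  independent propositional variable; a formula is an instance of a
  propositional tautology iff this is true under every such valuation.\<close>
primrec skel_eval :: "('p fm \<Rightarrow> bool) \<Rightarrow> 'p fm \<Rightarrow> bool" where
  "skel_eval v (Atom p) = v (Atom p)"
| "skel_eval v Bot = False"
| "skel_eval v (Imp a b) = (skel_eval v a \<longrightarrow> skel_eval v b)"
| "skel_eval v (Dia_s a) = v (Dia_s a)"
| "skel_eval v (Dia_t a) = v (Dia_t a)"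

definition taut_instance :: "'p fm \<Rightarrow> bool" where
  "taut_instance a \<longleftrightarrow> (\<forall>v. skel_eval v a)"

definition t_i_formula :: "nat \<Rightarrow> 'p fm \<Rightarrow> bool" where
  "t_i_formula i a \<longleftrightarrow> (\<exists>bs. length bs = i \<and> i \<ge> 1 \<and> (\<forall>b\<in>set bs. is_prop b) \<and>
      (\<forall>j<i. \<forall>k<i. j \<noteq> k \<longrightarrow> prop_contradiction (Conj (bs ! j) (bs ! k))) \<and>
      a = ConjList (map Dia_t bs))"

primrec subst :: "('p \<Rightarrow> 'p fm) \<Rightarrow> 'p fm \<Rightarrow> 'p fm" where
  "subst \<sigma> (Atom p) = \<sigma> p"
| "subst \<sigma> Bot = Bot"
| "subst \<sigma> (Imp a b) = Imp (subst \<sigma> a) (subst \<sigma> b)"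
| "subst \<sigma> (Dia_s a) = Dia_s (subst \<sigma> a)"
| "subst \<sigma> (Dia_t a) = Dia_t (subst \<sigma> a)"

inductive derivable :: "'p fm \<Rightarrow> bool" where
  A1: "taut_instance a \<Longrightarrow> derivable a"
| A2s: "derivable (Iff (Dia_s Bot) Bot)"
| A2t: "derivable (Iff (Dia_t Bot) Bot)"
| A3s: "derivable (Iff (Dia_s (Disj a b)) (Disj (Dia_s a) (Dia_s b)))"
| A3t: "derivable (Iff (Dia_t (Disj a b)) (Disj (Dia_t a) (Dia_t b)))"
| A4s: "derivable (Iff (Box_s a) (Neg (Dia_s (Neg a))))"
| A4t: "derivable (Iff (Box_t a) (Neg (Dia_t (Neg a))))"
| A5: "i \<ge> 1 \<Longrightarrow> t_i_formula i c \<Longrightarrow> derivable (Imp c (Tpow i Top))"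
| A6: "derivable (Imp (Tpow 2 Top) (Imp (Dia_t (Box_t a)) (Box_t (Dia_t a))))"
| A7a: "derivable (Imp (Dia_s (Box_t a)) (Box_t (Dia_s a)))"
| A7b: "derivable (Imp (Dia_t (Box_s a)) (Box_s (Dia_t a)))"
| A8a: "derivable (Imp (Dia_s (Tpow i Top)) (Box_s (Tpow i Top)))"
| A8b: "derivable (Imp (Dia_t (Tpow i Top)) (Box_t (Tpow i Top)))"
| A9a: "derivable (Imp (Tpow i Top) (Box_s (Dia_t (Tpow i Top))))"
| A9b: "derivable (Imp (Dia_s (Dia_t (Tpow i Top))) (Tpow i Top))"
| A10a: "derivable (Imp (Dia_s (Dia_s (Dia_t a))) (Dia_s (Dia_t (Dia_s a))))"
| A10b: "derivable (Imp (Dia_s (Dia_t (Dia_t a))) (Dia_t (Dia_s (Dia_t a))))"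
| MP: "derivable (Imp a b) \<Longrightarrow> derivable a \<Longrightarrow> derivable b"
| Mono_s: "derivable (Imp a b) \<Longrightarrow> derivable (Imp (Dia_s a) (Dia_s b))"
| Mono_t: "derivable (Imp a b) \<Longrightarrow> derivable (Imp (Dia_t a) (Dia_t b))"
| Subst: "derivable a \<Longrightarrow> derivable (subst \<sigma> a)"

text \<open>cells n = Q_n; sface i = s_i and tface i = t_i (one map per index i,
  acting on all dimensions, which is unambiguous since the Q_n are disjoint);
  lab = l (only relevant on Q_1); val = V.\<close>
record ('c, 'l, 'p) hdml =
  cells :: "nat \<Rightarrow> 'c set"
  sface :: "nat \<Rightarrow> 'c \<Rightarrow> 'c"
  tface :: "nat \<Rightarrow> 'c \<Rightarrow> 'c"
  lab :: "'c \<Rightarrow> 'l"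
  val :: "'c \<Rightarrow> 'p set"

definition cubical_set :: "('c, 'l, 'p) hdml \<Rightarrow> bool" where
  "cubical_set M \<longleftrightarrow>
     (\<forall>m n. m \<noteq> n \<longrightarrow> cells M m \<inter> cells M n = {}) \<and>
     (\<forall>n q i. n \<ge> 1 \<longrightarrow> q \<in> cells M n \<longrightarrow> 1 \<le> i \<longrightarrow> i \<le> n \<longrightarrow>
        sface M i q \<in> cells M (n - 1) \<and> tface M i q \<in> cells M (n - 1)) \<and>
     (\<forall>n q i j. q \<in> cells M n \<longrightarrow> 1 \<le> i \<longrightarrow> i < j \<longrightarrow> j \<le> n \<longrightarrow>
        (\<forall>\<alpha>\<in>{sface M, tface M}. \<forall>\<beta>\<in>{sface M, tface M}.
           \<alpha> i (\<beta> j q) = \<beta> (j - 1) (\<alpha> i q)))"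

definition hdml_model :: "('c, 'l, 'p) hdml \<Rightarrow> bool" where
  "hdml_model M \<longleftrightarrow> cubical_set M \<and>
     (\<forall>q\<in>cells M 2. \<forall>i\<in>{1, 2}. lab M (sface M i q) = lab M (tface M i q))"

text \<open>Satisfaction at a cell q of dimension n (intended: q \<in> cells M n).\<close>
primrec sat :: "('c, 'l, 'p) hdml \<Rightarrow> nat \<Rightarrow> 'c \<Rightarrow> 'p fm \<Rightarrow> bool" where
  "sat M n q (Atom p) = (p \<in> val M q)"
| "sat M n q Bot = False"
| "sat M n q (Imp a b) = (sat M n q a \<longrightarrow> sat M n q b)"
| "sat M n q (Dia_s a) = (\<exists>q'\<in>cells M (Suc n). \<exists>i. 1 \<le> i \<and> i \<le> Suc n \<and>
      sface M i q' = q \<and> sat M (Suc n) q' a)"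
| "sat M n q (Dia_t a) = (\<exists>i. 1 \<le> i \<and> i \<le> n \<and> sat M (n - 1) (tface M i q) a)"

end

theory Submission
  imports Defs
begin

lemma sat_Neg[simp]: "sat M n q (Neg a) = (\<not> sat M n q a)" by (simp add: Neg_def)
lemma sat_Top[simp]: "sat M n q Top" by (simp add: Top_def)
lemma sat_Disj[simp]: "sat M n q (Disj a b) = (sat M n q a \<or> sat M n q b)" by (auto simp add: Disj_def)
lemma sat_Conj[simp]: "sat M n q (Conj a b) = (sat M n q a \<and> sat M n q b)" by (auto simp add: Conj_def)
lemma sat_Iff[simp]: "sat M n q (Iff a b) = (sat M n q a = sat M n q b)" by (auto simp add: Iff_def)
lemma sat_Box_s[simp]: "sat M n q (Box_s a) = (\<forall>q'\<in>cells M (Suc n). \<forall>i. 1 \<le> i \<and> i \<le> Suc n \<and>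
      sface M i q' = q \<longrightarrow> sat M (Suc n) q' a)" by (auto simp add: Box_s_def)
lemma sat_Box_t[simp]: "sat M n q (Box_t a) = (\<forall>i. 1 \<le> i \<and> i \<le> n \<longrightarrow> sat M (n - 1) (tface M i q) a)"
  by (auto simp add: Box_t_def)

lemma faces:
  assumes "hdml_model M" "q \<in> cells M n" "1 \<le> i" "i \<le> n"
  shows "sface M i q \<in> cells M (n - 1)" "tface M i q \<in> cells M (n - 1)"
  using assms unfolding hdml_model_def cubical_set_def by auto

lemma facesS:
  assumes "hdml_model M" "q \<in> cells M (Suc n)" "1 \<le> i" "i \<le> Suc n"
  shows "sface M i q \<in> cells M n" "tface M i q \<in> cells M n"
  using faces[OF assms] by auto

lemma comm:
  assumes "hdml_model M" "q \<in> cells M n" "1 \<le> i" "i < j" "j \<le> n"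
  shows "sface M i (sface M j q) = sface M (j - 1) (sface M i q)"
    "sface M i (tface M j q) = tface M (j - 1) (sface M i q)"
    "tface M i (sface M j q) = sface M (j - 1) (tface M i q)"
    "tface M i (tface M j q) = tface M (j - 1) (tface M i q)"
  using assms unfolding hdml_model_def cubical_set_def by blast+

lemma disj_cells: "hdml_model M \<Longrightarrow> q \<in> cells M m \<Longrightarrow> q \<in> cells M n \<Longrightarrow> m = n"
  unfolding hdml_model_def cubical_set_def by blast

lemma sat_Tpow: "hdml_model M \<Longrightarrow> q \<in> cells M n \<Longrightarrow> sat M n q (Tpow i Top) = (i \<le> n)"
proof (induction i arbitrary: n q)
  case 0 then show ?case by simp
next
  case (Suc i)
  have "sat M n q (Tpow (Suc i) Top) = (\<exists>j. 1 \<le> j \<and> j \<le> n \<and> i \<le> n - 1)"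
    using Suc faces(2)[OF Suc.prems] by auto
  also have "\<dots> = (Suc i \<le> n)" by auto
  finally show ?case .
qed

lemma sat_prop: "is_prop b \<Longrightarrow> sat M n q b = peval (\<lambda>p. p \<in> val M q) b"
  by (induction b) auto

lemma sat_ConjList: "sat M n q (ConjList xs) = (\<forall>x\<in>set xs. sat M n q x)"
  by (induction xs rule: ConjList.induct) auto

lemma skel: "skel_eval (\<lambda>\<psi>. sat M n q \<psi>) a = sat M n q a"
  by (induction a) auto

lemma model_val: "hdml_model (M\<lparr>val := V\<rparr>) = hdml_model M"
  unfolding hdml_model_def cubical_set_def by simp

lemma sat_subst:
  assumes "hdml_model M"
  shows "q \<in> cells M n \<Longrightarrow> sat M n q (subst \<sigma> a) =
     sat (M\<lparr>val := \<lambda>c. {p. \<exists>m. c \<in> cells M m \<and> sat M m c (\<sigma> p)}\<rparr>) n q a"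
proof (induction a arbitrary: n q)
  case (Atom p)
  then show ?case using disj_cells[OF assms] by auto
next
  case (Dia_s a)
  then show ?case by auto
next
  case (Dia_t a)
  show ?case
  proof -
    have "\<And>i. 1 \<le> i \<Longrightarrow> i \<le> n \<Longrightarrow> sat M (n - 1) (tface M i q) (subst \<sigma> a) =
      sat (M\<lparr>val := \<lambda>c. {p. \<exists>m. c \<in> cells M m \<and> sat M m c (\<sigma> p)}\<rparr>) (n-1) (tface M i q) a"
      using Dia_t faces(2)[OF assms Dia_t.prems] by blast
    then show ?thesis by auto
  qed
qed auto

lemma A5_sound:
  assumes M: "hdml_model M" and q: "q \<in> cells M n" and ti: "t_i_formula i c" and s: "sat M n q c"
  shows "i \<le> n"
proof -
  obtain bs where len: "length bs = i" and props: "\<forall>b\<in>set bs. is_prop b"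
    and contr: "\<forall>j<i. \<forall>k<i. j \<noteq> k \<longrightarrow> prop_contradiction (Conj (bs ! j) (bs ! k))"
    and c: "c = ConjList (map Dia_t bs)"
    using ti unfolding t_i_formula_def by blast
  have all: "\<forall>j<i. \<exists>k. 1 \<le> k \<and> k \<le> n \<and> sat M (n - 1) (tface M k q) (bs ! j)"
    using s c len by (auto simp: sat_ConjList)
  define f where "f j = (SOME k. 1 \<le> k \<and> k \<le> n \<and> sat M (n - 1) (tface M k q) (bs ! j))" for j
  have f: "\<And>j. j < i \<Longrightarrow> 1 \<le> f j \<and> f j \<le> n \<and> sat M (n - 1) (tface M (f j) q) (bs ! j)"
    unfolding f_def using all by (metis (mono_tags, lifting) someI_ex)
  have inj: "inj_on f {..<i}"
  proof (rule inj_onI)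
    fix j k assume j: "j \<in> {..<i}" and k: "k \<in> {..<i}" and e: "f j = f k"
    show "j = k"
    proof (rule ccontr)
      assume ne: "j \<noteq> k"
      let ?v = "\<lambda>p. p \<in> val M (tface M (f j) q)"
      have pj: "is_prop (bs ! j)" "is_prop (bs ! k)" using props j k len by auto
      have "peval ?v (bs ! j)" using f[of j] j sat_prop[OF pj(1), of M "n - 1"] by auto
      moreover have "peval ?v (bs ! k)" using f[of k] k e sat_prop[OF pj(2), of M "n - 1"] by auto
      moreover have "\<not> peval ?v (Conj (bs ! j) (bs ! k))"
        using contr j k ne unfolding prop_contradiction_def by auto
      ultimately show False by (simp add: Conj_def Neg_def)
    qed
  qed
  have "f ` {..<i} \<subseteq> {1..n}" using f by auto
  from card_inj_on_le[OF inj this] show ?thesis by simp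
qed

lemma A6_sound:
  assumes M: "hdml_model M" and q: "q \<in> cells M n" and n2: "2 \<le> n"
    and i: "1 \<le> i" "i \<le> n" and box: "\<forall>j. 1 \<le> j \<and> j \<le> n - 1 \<longrightarrow> sat M (n - 1 - 1) (tface M j (tface M i q)) a"
    and k: "1 \<le> k" "k \<le> n"
  shows "\<exists>l. 1 \<le> l \<and> l \<le> n - 1 \<and> sat M (n - 1 - 1) (tface M l (tface M k q)) a"
proof -
  consider "k = i" | "i < k" | "k < i" by linarith
  then show ?thesis
  proof cases
    case 1 then show ?thesis using box n2 by (intro exI[of _ 1]) auto
  next
    case 2
    have "tface M i (tface M k q) = tface M (k - 1) (tface M i q)" using comm(4)[OF M q i(1) 2 k(2)] .
    moreover have "1 \<le> k - 1 \<and> k - 1 \<le> n - 1" using 2 i k by linarith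
    ultimately show ?thesis using box[rule_format, of "k - 1"] 2 k i by (intro exI[of _ i]) auto
  next
    case 3
    have "tface M k (tface M i q) = tface M (i - 1) (tface M k q)" using comm(4)[OF M q k(1) 3 i(2)] .
    then show ?thesis using box[rule_format, of k] 3 k i by (intro exI[of _ "i - 1"]) auto
  qed
qed

lemma A7a_sound:
  assumes M: "hdml_model M" and q': "q' \<in> cells M (Suc (Suc m))" and i: "1 \<le> i" "i \<le> Suc (Suc m)"
    and box: "\<forall>j. 1 \<le> j \<and> j \<le> Suc (Suc m) \<longrightarrow> sat M (Suc m) (tface M j q') a"
    and k: "1 \<le> k" "k \<le> Suc m"
  shows "\<exists>q''\<in>cells M (Suc m). \<exists>l. 1 \<le> l \<and> l \<le> Suc m \<and> sface M l q'' = tface M k (sface M i q') \<and> sat M (Suc m) q'' a"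
proof (cases "k < i")
  case True
  have e: "tface M k (sface M i q') = sface M (i - 1) (tface M k q')" using comm(3)[OF M q' k(1) True i(2)] .
  have c: "tface M k q' \<in> cells M (Suc m)" using facesS(2)[OF M q', of k] k by simp
  have s: "sat M (Suc m) (tface M k q') a" using box k by simp
  show ?thesis using e c s True k i by (intro bexI[OF _ c] exI[of _ "i - 1"]) auto
next
  case False
  have e: "sface M i (tface M (Suc k) q') = tface M k (sface M i q')" using comm(2)[OF M q' i(1), of "Suc k"] False k by simp
  have c: "tface M (Suc k) q' \<in> cells M (Suc m)" using facesS(2)[OF M q', of "Suc k"] k by simp
  have s: "sat M (Suc m) (tface M (Suc k) q') a" using box k by simp
  show ?thesis using e c s False k i by (intro bexI[OF _ c] exI[of _ i]) auto
qed

lemma A7b_sound: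
  assumes M: "hdml_model M" and q': "q' \<in> cells M (Suc (Suc m))" and k: "1 \<le> k" "k \<le> Suc (Suc m)"
    and i: "1 \<le> i" "i \<le> Suc m"
    and H: "\<forall>q''\<in>cells M (Suc m). \<forall>l. 1 \<le> l \<and> l \<le> Suc m \<and> sface M l q'' = tface M i (sface M k q') \<longrightarrow> sat M (Suc m) q'' a"
  shows "\<exists>j. 1 \<le> j \<and> j \<le> Suc (Suc m) \<and> sat M (Suc m) (tface M j q') a"
proof (cases "i < k")
  case True
  have e: "tface M i (sface M k q') = sface M (k - 1) (tface M i q')" using comm(3)[OF M q' i(1) True k(2)] .
  have c: "tface M i q' \<in> cells M (Suc m)" using facesS(2)[OF M q', of i] i by simp
  have kk: "1 \<le> k - 1 \<and> k - 1 \<le> Suc m" using True i k by linarith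
  have "sat M (Suc m) (tface M i q') a" using H[rule_format, OF c, of "k - 1"] e kk by simp
  then show ?thesis using i by auto
next
  case False
  have e: "sface M k (tface M (Suc i) q') = tface M i (sface M k q')" using comm(2)[OF M q' k(1), of "Suc i"] False i by simp
  have c: "tface M (Suc i) q' \<in> cells M (Suc m)" using facesS(2)[OF M q', of "Suc i"] i by simp
  have "sat M (Suc m) (tface M (Suc i) q') a" using H[rule_format, OF c, of k] e False i k by simp
  then show ?thesis using i by (intro exI[of _ "Suc i"]) auto
qed

lemma A10a_sound:
  assumes M: "hdml_model M" and q2: "q2 \<in> cells M (Suc (Suc n))"
    and i: "1 \<le> i" "i \<le> Suc n" and j: "1 \<le> j" "j \<le> Suc (Suc n)" and k: "1 \<le> k" "k \<le> Suc (Suc n)"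
    and s: "sat M (Suc n) (tface M k q2) a"
  shows "\<exists>q'\<in>cells M (Suc n). \<exists>l. 1 \<le> l \<and> l \<le> Suc n \<and> sface M l q' = sface M i (sface M j q2) \<and>
     (\<exists>mm. 1 \<le> mm \<and> mm \<le> Suc n \<and> (\<exists>r\<in>cells M (Suc n). \<exists>p. 1 \<le> p \<and> p \<le> Suc n \<and>
        sface M p r = tface M mm q' \<and> sat M (Suc n) r a))"
proof -
  have r: "tface M k q2 \<in> cells M (Suc n)" using facesS(2)[OF M q2 k] .
  have q1: "sface M j q2 \<in> cells M (Suc n)" using facesS(1)[OF M q2 j] .
  consider "k < j" | "j < k" | "k = j" "i < j" | "k = j" "j \<le> i" by linarith
  then show ?thesis
  proof cases
    case 1
    have e: "tface M k (sface M j q2) = sface M (j - 1) (tface M k q2)" using comm(3)[OF M q2 k(1) 1 j(2)] .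
    show ?thesis
      apply (rule bexI[OF _ q1], rule exI[of _ i])
      using i 1 j k e r s by (intro conjI exI[of _ k] bexI[OF _ r] exI[of _ "j - 1"]) auto
  next
    case 2
    have e: "sface M j (tface M k q2) = tface M (k - 1) (sface M j q2)" using comm(2)[OF M q2 j(1) 2 k(2)] .
    show ?thesis
      apply (rule bexI[OF _ q1], rule exI[of _ i])
      using i 2 j k e r s by (intro conjI exI[of _ "k - 1"] bexI[OF _ r] exI[of _ j]) auto
  next
    case 3
    have e1: "sface M i (sface M j q2) = sface M (j - 1) (sface M i q2)" using comm(1)[OF M q2 i(1) 3(2) j(2)] .
    have e2: "sface M i (tface M k q2) = tface M (k - 1) (sface M i q2)" using comm(2)[OF M q2 i(1), of k] 3 k by simp
    have c: "sface M i q2 \<in> cells M (Suc n)" using facesS(1)[OF M q2, of i] i by simp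
    show ?thesis
      apply (rule bexI[OF _ c], rule exI[of _ "j - 1"])
      using i 3 j k e1 e2 r s by (intro conjI exI[of _ "k - 1"] bexI[OF _ r] exI[of _ i]) auto
  next
    case 4
    have e1: "sface M j (sface M (Suc i) q2) = sface M i (sface M j q2)" using comm(1)[OF M q2 j(1), of "Suc i"] 4 i by simp
    have e2: "tface M k (sface M (Suc i) q2) = sface M i (tface M k q2)" using comm(3)[OF M q2 k(1), of "Suc i"] 4 i by simp
    have c: "sface M (Suc i) q2 \<in> cells M (Suc n)" using facesS(1)[OF M q2, of "Suc i"] i by simp
    show ?thesis
      apply (rule bexI[OF _ c], rule exI[of _ j])
      using i 4 j k e1 e2 r s by (intro conjI exI[of _ k] bexI[OF _ r] exI[of _ i]) auto
  qed
qed

lemma A10b_sound: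
  assumes M: "hdml_model M" and q1: "q1 \<in> cells M (Suc (Suc m))"
    and i: "1 \<le> i" "i \<le> Suc (Suc m)" and j: "1 \<le> j" "j \<le> Suc (Suc m)" and k: "1 \<le> k" "k \<le> Suc m"
    and s: "sat M m (tface M k (tface M j q1)) a"
  shows "\<exists>mm. 1 \<le> mm \<and> mm \<le> Suc m \<and> (\<exists>r\<in>cells M (Suc m). \<exists>l. 1 \<le> l \<and> l \<le> Suc m \<and>
      sface M l r = tface M mm (sface M i q1) \<and> (\<exists>p. 1 \<le> p \<and> p \<le> Suc m \<and> sat M m (tface M p r) a))"
proof -
  have rj: "tface M j q1 \<in> cells M (Suc m)" using facesS(2)[OF M q1 j] .
  consider "i < j" | "j < i" | "j = i" "k < i" | "j = i" "i \<le> k" by linarith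
  then show ?thesis
  proof cases
    case 1
    have e: "sface M i (tface M j q1) = tface M (j - 1) (sface M i q1)" using comm(2)[OF M q1 i(1) 1 j(2)] .
    show ?thesis
      apply (rule exI[of _ "j - 1"])
      using i 1 j k e rj s by (intro conjI bexI[OF _ rj] exI[of _ i] exI[of _ k]) auto
  next
    case 2
    have e: "tface M j (sface M i q1) = sface M (i - 1) (tface M j q1)" using comm(3)[OF M q1 j(1) 2 i(2)] .
    show ?thesis
      apply (rule exI[of _ j])
      using i 2 j k e rj s by (intro conjI bexI[OF _ rj] exI[of _ "i - 1"] exI[of _ k]) auto
  next
    case 3
    have e1: "tface M k (tface M i q1) = tface M (i - 1) (tface M k q1)" using comm(4)[OF M q1 k(1) 3(2) i(2)] .
    have e2: "tface M k (sface M i q1) = sface M (i - 1) (tface M k q1)" using comm(3)[OF M q1 k(1) 3(2) i(2)] .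
    have r: "tface M k q1 \<in> cells M (Suc m)" using facesS(2)[OF M q1, of k] k by simp
    show ?thesis
      apply (rule exI[of _ k])
      using i 3 j k e1 e2 r s by (intro conjI bexI[OF _ r] exI[of _ "i - 1"] exI[of _ "i - 1"]) auto
  next
    case 4
    have e1: "tface M i (tface M (Suc k) q1) = tface M k (tface M i q1)" using comm(4)[OF M q1 i(1), of "Suc k"] 4 k by simp
    have e2: "sface M i (tface M (Suc k) q1) = tface M k (sface M i q1)" using comm(2)[OF M q1 i(1), of "Suc k"] 4 k by simp
    have r: "tface M (Suc k) q1 \<in> cells M (Suc m)" using facesS(2)[OF M q1, of "Suc k"] k by simp
    show ?thesis
      apply (rule exI[of _ k])
      using i 4 j k e1 e2 r s by (intro conjI bexI[OF _ r] exI[of _ i] exI[of _ i]) auto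
  qed
qed


lemma soundness:
  "derivable \<phi> \<Longrightarrow> hdml_model M \<Longrightarrow> q \<in> cells M n \<Longrightarrow> sat M n q \<phi>"
proof (induction \<phi> arbitrary: M n q rule: derivable.induct)
  case (A1 a)
  then show ?case using skel[of M n q a] unfolding taut_instance_def by metis
next
  case (A5 i c)
  then show ?case using A5_sound sat_Tpow by (metis sat.simps(3))
next
  case (A6 a)
  have "sat M n q (Box_t (Dia_t a))" if t2: "sat M n q (Tpow 2 Top)" and d: "sat M n q (Dia_t (Box_t a))"
  proof -
    have n2: "2 \<le> n" using sat_Tpow[OF A6.prems] t2 by blast
    from d obtain i where i: "1 \<le> i" "i \<le> n"
      and box: "\<forall>j. 1 \<le> j \<and> j \<le> n - 1 \<longrightarrow> sat M (n - 1 - 1) (tface M j (tface M i q)) a" by auto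
    show ?thesis using A6_sound[OF A6.prems n2 i box] by auto
  qed
  then show ?case by simp
next
  case (A7a a)
  have "sat M n q (Box_t (Dia_s a))" if d: "sat M n q (Dia_s (Box_t a))"
  proof (cases n)
    case 0 then show ?thesis by simp
  next
    case (Suc m)
    from d obtain q' i where q': "q' \<in> cells M (Suc (Suc m))" and i: "1 \<le> i" "i \<le> Suc (Suc m)"
      and e: "sface M i q' = q"
      and box: "\<forall>j. 1 \<le> j \<and> j \<le> Suc (Suc m) \<longrightarrow> sat M (Suc m) (tface M j q') a" unfolding Suc by auto
    show ?thesis using A7a_sound[OF A7a.prems(1) q' i box] e unfolding Suc by auto
  qed
  then show ?case by simp
next
  case (A7b a)
  have "sat M n q (Box_s (Dia_t a))" if d: "sat M n q (Dia_t (Box_s a))"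
  proof -
    from d obtain i where i0: "1 \<le> i" "i \<le> n"
      and H0: "\<forall>q''\<in>cells M (Suc (n - 1)). \<forall>l. 1 \<le> l \<and> l \<le> Suc (n - 1) \<and> sface M l q'' = tface M i q \<longrightarrow> sat M (Suc (n - 1)) q'' a"
      by auto
    obtain m where n: "n = Suc m" using i0 by (cases n) auto
    have i: "1 \<le> i" "i \<le> Suc m" using i0 n by auto
    have H: "\<forall>q''\<in>cells M (Suc m). \<forall>l. 1 \<le> l \<and> l \<le> Suc m \<and> sface M l q'' = tface M i q \<longrightarrow> sat M (Suc m) q'' a"
      using H0 n by simp
    show ?thesis
    proof (simp only: sat_Box_s, intro ballI allI impI)
      fix q' k assume q': "q' \<in> cells M (Suc n)" and k: "1 \<le> k \<and> k \<le> Suc n \<and> sface M k q' = q"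
      have "\<exists>j. 1 \<le> j \<and> j \<le> Suc (Suc m) \<and> sat M (Suc m) (tface M j q') a"
        using A7b_sound[OF A7b.prems(1), of q' m k i a] q' k i H n by auto
      then show "sat M (Suc n) q' (Dia_t a)" using n by simp
    qed
  qed
  then show ?case by simp
next
  case (A8a i)
  then show ?case using sat_Tpow facesS by fastforce
next
  case (A8b i)
  then show ?case using sat_Tpow faces by fastforce
next
  case (A9a i)
  then show ?case using sat_Tpow facesS by fastforce
next
  case (A9b i)
  then show ?case using sat_Tpow facesS by fastforce
next
  case (A10a a)
  have "sat M n q (Dia_s (Dia_t (Dia_s a)))" if d: "sat M n q (Dia_s (Dia_s (Dia_t a)))"
  proof -
    from d obtain q1 i q2 j k where q1: "q1 \<in> cells M (Suc n)" and i: "1 \<le> i" "i \<le> Suc n" and e1: "sface M i q1 = q"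
      and q2: "q2 \<in> cells M (Suc (Suc n))" and j: "1 \<le> j" "j \<le> Suc (Suc n)" and e2: "sface M j q2 = q1"
      and k: "1 \<le> k" "k \<le> Suc (Suc n)" and s: "sat M (Suc n) (tface M k q2) a" by auto
    have "\<exists>q'\<in>cells M (Suc n). \<exists>l. 1 \<le> l \<and> l \<le> Suc n \<and> sface M l q' = q \<and>
     (\<exists>mm. 1 \<le> mm \<and> mm \<le> Suc n \<and> (\<exists>r\<in>cells M (Suc n). \<exists>p. 1 \<le> p \<and> p \<le> Suc n \<and>
        sface M p r = tface M mm q' \<and> sat M (Suc n) r a))"
      using A10a_sound[OF A10a.prems(1) q2 i j k s] e1 e2 by simp
    then show ?thesis by simp
  qed
  then show ?case by simp
next
  case (A10b a)
  have "sat M n q (Dia_t (Dia_s (Dia_t a)))" if d: "sat M n q (Dia_s (Dia_t (Dia_t a)))"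
  proof -
    from d obtain q1 i j k where q1: "q1 \<in> cells M (Suc n)" and i: "1 \<le> i" "i \<le> Suc n" and e1: "sface M i q1 = q"
      and j: "1 \<le> j" "j \<le> Suc n" and k: "1 \<le> k" "k \<le> n" and s: "sat M (n - 1) (tface M k (tface M j q1)) a" by auto
    obtain m where n: "n = Suc m" using k by (cases n) auto
    have "\<exists>mm. 1 \<le> mm \<and> mm \<le> Suc m \<and> (\<exists>r\<in>cells M (Suc m). \<exists>l. 1 \<le> l \<and> l \<le> Suc m \<and>
      sface M l r = tface M mm q \<and> (\<exists>p. 1 \<le> p \<and> p \<le> Suc m \<and> sat M m (tface M p r) a))"
      using A10b_sound[OF A10b.prems(1), of q1 m i j k a] q1 i j k s e1 n by simp
    then show ?thesis using n by simp
  qed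
  then show ?case by simp
next
  case (MP a b)
  have "sat M n q (Imp a b)" by (rule MP.IH(1)[OF MP.prems])
  moreover have "sat M n q a" by (rule MP.IH(2)[OF MP.prems])
  ultimately show ?case by (simp only: sat.simps(3))
next
  case (Mono_s a b)
  have "sat M n q (Dia_s b)" if h: "sat M n q (Dia_s a)"
  proof -
    from h have "\<exists>q'\<in>cells M (Suc n). \<exists>i. 1 \<le> i \<and> i \<le> Suc n \<and> sface M i q' = q \<and> sat M (Suc n) q' a"
      by (simp only: sat.simps)
    then obtain q' i where c: "q' \<in> cells M (Suc n)" and i: "1 \<le> i" "i \<le> Suc n" "sface M i q' = q"
      and s: "sat M (Suc n) q' a" by blast
    have "sat M (Suc n) q' b" using Mono_s.IH[OF Mono_s.prems(1) c] s by (simp only: sat.simps(3))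
    then show ?thesis unfolding sat.simps(4) using c i by blast
  qed
  then show ?case unfolding sat.simps(3) by (rule impI)
next
  case (Mono_t a b)
  have "sat M n q (Dia_t b)" if h: "sat M n q (Dia_t a)"
  proof -
    from h obtain i where i: "1 \<le> i" "i \<le> n" and s: "sat M (n - 1) (tface M i q) a"
      unfolding sat.simps(5) by blast
    have c: "tface M i q \<in> cells M (n - 1)" using faces(2)[OF Mono_t.prems i] .
    have "sat M (n - 1) (tface M i q) b" using Mono_t.IH[OF Mono_t.prems(1) c] s by (simp only: sat.simps(3))
    then show ?thesis unfolding sat.simps(5) using i by blast
  qed
  then show ?case unfolding sat.simps(3) by (rule impI)
next
  case (Subst a \<sigma>)
  let ?V = "\<lambda>c. {p. \<exists>m. c \<in> cells M m \<and> sat M m c (\<sigma> p)}"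
  have h1: "hdml_model (M\<lparr>val := ?V\<rparr>)" using model_val Subst.prems(1) by blast
  have h2: "q \<in> cells (M\<lparr>val := ?V\<rparr>) n" using Subst.prems(2) by simp
  have "sat (M\<lparr>val := ?V\<rparr>) n q a" by (rule Subst.IH[OF h1 h2])
  then show ?case using sat_subst[OF Subst.prems(1) Subst.prems(2), of \<sigma> a] by blast
next
  case A2s then show ?case by simp
next
  case A2t then show ?case by simp
next
  case (A3s a b) show ?case by (simp only: sat_Iff sat_Disj sat.simps(4)) blast
next
  case (A3t a b) show ?case by (simp only: sat_Iff sat_Disj sat.simps(5)) blast
next
  case (A4s a) then show ?case by (simp; blast)
next
  case (A4t a) show ?case by (simp only: sat_Iff sat_Box_t sat_Neg sat.simps(5)) blast
qed

theorem mainTheorem8: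
  fixes \<phi> :: "'p fm" and M :: "('c, 'l, 'p) hdml"
  assumes "derivable \<phi>" and "hdml_model M" and "q \<in> cells M n"
  shows "sat M n q \<phi>"
  by (rule soundness[OF assms])

end
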